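(* Let $\varepsilon>0$. (Lower case, $\tau\in(0,1]$:) If $\pi$ is a policy for which there exists $w\in\mathcal W_T$ with $d(w,\underline{q}^*_\tau)\le\varepsilon$ and $F^\pi(w)<\tau$, then $\pi$ is $\varepsilon$-optimal for the lower $\tau$-quantile criterion. (Upper case, $\tau\in[0,1)$:) If $\pi$ is a policy for which there exists $w\in\mathcal W_T$ with $d(w,\overline{q}^*_\tau)\le\varepsilon$ and $G^\pi(w)\ge 1-\tau$, then $\pi$ is $\varepsilon$-optimal for the upper $\tau$-quantile criterion.
   Context: An MDP is a tuple $(\mathcal S,\mathcal A,\mathcal P,r,s_0)$ with finite state set, finite action set, transition probabilities, reward function $r:\mathcal S\times\mathcal A\to\mathcal R$, initial state $s_0$, and finite horizon $T$; policies are sequences of $T$ (possibly history-dependent, randomized) decision rules. The wealth of a history is $w(h_0)=w_0$, $w(h_t)=w(h_{t-1})\circ r(s_{t-1},a_{t-1})$ for a binary operation $\circ$ with left identity $w_0$. The set $\mathcal W_T$ of wealth levels of $T$-histories is totally ordered by $\preceq_{\mathcal W}$, has least and greatest elements, and carries a distance $d$ consistent with this order. For a policy $\pi$, $p^\pi(w)$ is the probability that the generated $T$-history has wealth $w$; $F^\pi(w)=\sum_{w'\preceq_{\mathcal W}w}p^\pi(w')$ and $G^\pi(w)=\sum_{w\preceq_{\mathcal W}w'}p^\pi(w')$. Lower $\tau$-quantile: $\underline{q}^\pi_\tau=\min\{w:F^\pi(w)\ge\tau\}$; upper $\tau$-quantile: $\overline{q}^\pi_\tau=\max\{w:G^\pi(w)\ge1-\tau\}$;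 $\underline{q}^*_\tau=\max_\pi\underline{q}^\pi_\tau$, $\overline{q}^*_\tau=\max_\pi\overline{q}^\pi_\tau$ (max over all policies, w.r.t. $\prec_{\mathcal W}$). A policy $\pi$ is $\varepsilon$-optimal for the lower (resp. upper) $\tau$-quantile criterion if $d(\underline{q}^\pi_\tau,\underline{q}^*_\tau)\le\varepsilon$ (resp. $d(\overline{q}^\pi_\tau,\overline{q}^*_\tau)\le\varepsilon$). *)

theory Defs
  imports "HOL-Probability.Probability"
begin

text \<open>A history h_t = (s_0,a_0,...,s_{t-1},a_{t-1},s_t) is represented as the list of
  state-action pairs together with the current state.\<close>

type_synonym ('s,'a) hist = "('s \<times> 'a) list \<times> 's"
type_synonym ('s,'a) policy = "nat \<Rightarrow> ('s,'a) hist \<Rightarrow> 'a pmf"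

fun hist_dist :: "('s \<Rightarrow> 'a \<Rightarrow> 's pmf) \<Rightarrow> 's \<Rightarrow> ('s,'a) policy \<Rightarrow> nat \<Rightarrow> ('s,'a) hist pmf" where
  "hist_dist P s0 \<pi> 0 = return_pmf ([], s0)"
| "hist_dist P s0 \<pi> (Suc t) =
     bind_pmf (hist_dist P s0 \<pi> t) (\<lambda>h. bind_pmf (\<pi> t h)
       (\<lambda>a. map_pmf (\<lambda>s'. (fst h @ [(snd h, a)], s')) (P (snd h) a)))"

definition wealth :: "('s \<Rightarrow> 'a \<Rightarrow> 'w) \<Rightarrow> ('w \<Rightarrow> 'w \<Rightarrow> 'w) \<Rightarrow> 'w \<Rightarrow> ('s,'a) hist \<Rightarrow> 'w" where
  "wealth r op w0 h = foldl (\<lambda>w (s,a). op w (r s a)) w0 (fst h)"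

definition T_histories :: "'s \<Rightarrow> nat \<Rightarrow> ('s,'a) hist set" where
  "T_histories s0 T = {h. length (fst h) = T \<and> (fst h \<noteq> [] \<longrightarrow> fst (hd (fst h)) = s0)}"

definition wealth_levels :: "('s \<Rightarrow> 'a \<Rightarrow> 'w) \<Rightarrow> ('w \<Rightarrow> 'w \<Rightarrow> 'w) \<Rightarrow> 'w \<Rightarrow> 's \<Rightarrow> nat \<Rightarrow> 'w set" where
  "wealth_levels r op w0 s0 T = wealth r op w0 ` T_histories s0 T"

locale quantile_mdp =
  fixes P :: "'s::finite \<Rightarrow> 'a::finite \<Rightarrow> 's pmf"
    and r :: "'s \<Rightarrow> 'a \<Rightarrow> 'w"
    and s0 :: 's
    and T :: nat
    and op :: "'w \<Rightarrow> 'w \<Rightarrow> 'w"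
    and w0 :: 'w
    and le :: "'w \<Rightarrow> 'w \<Rightarrow> bool"
    and d :: "'w \<Rightarrow> 'w \<Rightarrow> real"
  assumes left_identity: "\<And>x. op w0 x = x"
    and le_refl: "\<And>x. x \<in> wealth_levels r op w0 s0 T \<Longrightarrow> le x x"
    and le_antisym: "\<And>x y. x \<in> wealth_levels r op w0 s0 T \<Longrightarrow> y \<in> wealth_levels r op w0 s0 T
                       \<Longrightarrow> le x y \<Longrightarrow> le y x \<Longrightarrow> x = y"
    and le_trans: "\<And>x y z. x \<in> wealth_levels r op w0 s0 T \<Longrightarrow> y \<in> wealth_levels r op w0 s0 T
                       \<Longrightarrow> z \<in> wealth_levels r op w0 s0 T \<Longrightarrow> le x y \<Longrightarrow> le y z \<Longrightarrow> le x z"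
    and le_total: "\<And>x y. x \<in> wealth_levels r op w0 s0 T \<Longrightarrow> y \<in> wealth_levels r op w0 s0 T
                       \<Longrightarrow> le x y \<or> le y x"
    and has_least: "\<exists>m\<in>wealth_levels r op w0 s0 T. \<forall>x\<in>wealth_levels r op w0 s0 T. le m x"
    and has_greatest: "\<exists>m\<in>wealth_levels r op w0 s0 T. \<forall>x\<in>wealth_levels r op w0 s0 T. le x m"
    and d_nonneg: "\<And>x y. x \<in> wealth_levels r op w0 s0 T \<Longrightarrow> y \<in> wealth_levels r op w0 s0 T \<Longrightarrow> 0 \<le> d x y"
    and d_zero: "\<And>x y. x \<in> wealth_levels r op w0 s0 T \<Longrightarrow> y \<in> wealth_levels r op w0 s0 T \<Longrightarrow> d x y = 0 \<longleftrightarrow> x = y"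
    and d_sym: "\<And>x y. x \<in> wealth_levels r op w0 s0 T \<Longrightarrow> y \<in> wealth_levels r op w0 s0 T \<Longrightarrow> d x y = d y x"
    and d_triangle: "\<And>x y z. x \<in> wealth_levels r op w0 s0 T \<Longrightarrow> y \<in> wealth_levels r op w0 s0 T
                       \<Longrightarrow> z \<in> wealth_levels r op w0 s0 T \<Longrightarrow> d x z \<le> d x y + d y z"
    and d_consistent: "\<And>x y z. x \<in> wealth_levels r op w0 s0 T \<Longrightarrow> y \<in> wealth_levels r op w0 s0 T
                       \<Longrightarrow> z \<in> wealth_levels r op w0 s0 T \<Longrightarrow> le x y \<Longrightarrow> le y z
                       \<Longrightarrow> d x y \<le> d x z \<and> d y z \<le> d x z"
begin

abbreviation W where "W \<equiv> wealth_levels r op w0 s0 T"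

definition wealth_dist :: "('s,'a) policy \<Rightarrow> 'w pmf" where
  "wealth_dist \<pi> = map_pmf (wealth r op w0) (hist_dist P s0 \<pi> T)"

definition p :: "('s,'a) policy \<Rightarrow> 'w \<Rightarrow> real" where
  "p \<pi> w = pmf (wealth_dist \<pi>) w"

definition F :: "('s,'a) policy \<Rightarrow> 'w \<Rightarrow> real" where
  "F \<pi> w = (\<Sum>w'\<in>{w'\<in>W. le w' w}. p \<pi> w')"

definition G :: "('s,'a) policy \<Rightarrow> 'w \<Rightarrow> real" where
  "G \<pi> w = (\<Sum>w'\<in>{w'\<in>W. le w w'}. p \<pi> w')"

definition lower_q :: "('s,'a) policy \<Rightarrow> real \<Rightarrow> 'w" where
  "lower_q \<pi> \<tau> = (THE q. q \<in> W \<and> F \<pi> q \<ge> \<tau> \<and> (\<forall>q'\<in>W. F \<pi> q' \<ge> \<tau> \<longrightarrow> le q q'))"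

definition upper_q :: "('s,'a) policy \<Rightarrow> real \<Rightarrow> 'w" where
  "upper_q \<pi> \<tau> = (THE q. q \<in> W \<and> G \<pi> q \<ge> 1 - \<tau> \<and> (\<forall>q'\<in>W. G \<pi> q' \<ge> 1 - \<tau> \<longrightarrow> le q' q))"

definition lower_q_opt :: "real \<Rightarrow> 'w" where
  "lower_q_opt \<tau> = (THE q. (\<exists>\<pi>. q = lower_q \<pi> \<tau>) \<and> (\<forall>\<pi>. le (lower_q \<pi> \<tau>) q))"

definition upper_q_opt :: "real \<Rightarrow> 'w" where
  "upper_q_opt \<tau> = (THE q. (\<exists>\<pi>. q = upper_q \<pi> \<tau>) \<and> (\<forall>\<pi>. le (upper_q \<pi> \<tau>) q))"

definition eps_opt_lower :: "real \<Rightarrow> real \<Rightarrow> ('s,'a) policy \<Rightarrow> bool" where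
  "eps_opt_lower \<epsilon> \<tau> \<pi> \<longleftrightarrow> d (lower_q \<pi> \<tau>) (lower_q_opt \<tau>) \<le> \<epsilon>"

definition eps_opt_upper :: "real \<Rightarrow> real \<Rightarrow> ('s,'a) policy \<Rightarrow> bool" where
  "eps_opt_upper \<epsilon> \<tau> \<pi> \<longleftrightarrow> d (upper_q \<pi> \<tau>) (upper_q_opt \<tau>) \<le> \<epsilon>"

end

end

theory Submission
  imports Defs
begin


lemma hist_dist_support:
  "h \<in> set_pmf (hist_dist P s0 \<pi> t) \<Longrightarrow> length (fst h) = t \<and> (fst h = [] \<longrightarrow> snd h = s0)
     \<and> (fst h \<noteq> [] \<longrightarrow> fst (hd (fst h)) = s0)"
proof (induction t arbitrary: h)
  case 0
  then show ?case by simp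
next
  case (Suc t)
  from Suc.prems obtain h' a s' where h': "h' \<in> set_pmf (hist_dist P s0 \<pi> t)"
    and h: "h = (fst h' @ [(snd h', a)], s')" by (auto simp only: hist_dist.simps set_bind_pmf set_map_pmf UN_iff image_iff)
  have IH: "length (fst h') = t \<and> (fst h' = [] \<longrightarrow> snd h' = s0)
     \<and> (fst h' \<noteq> [] \<longrightarrow> fst (hd (fst h')) = s0)" using Suc.IH[OF h'] .
  show ?case
  proof (cases "fst h'")
    case Nil then show ?thesis using IH h by simp
  next
    case (Cons x xs) then show ?thesis using IH h by simp
  qed
qed

context quantile_mdp
begin

lemma W_finite: "finite W"
proof -
  have "T_histories s0 T \<subseteq> {xs. set xs \<subseteq> UNIV \<and> length xs = T} \<times> UNIV"
    unfolding T_histories_def by auto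
  moreover have "finite ({xs::('s\<times>'a) list. set xs \<subseteq> UNIV \<and> length xs = T} \<times> (UNIV::'s set))"
    by (intro finite_cartesian_product finite_lists_length_eq) auto
  ultimately have "finite (T_histories s0 T :: ('s,'a) hist set)" by (rule finite_subset)
  then show ?thesis unfolding wealth_levels_def by simp
qed

lemma wd_support: "set_pmf (wealth_dist \<pi>) \<subseteq> W"
proof
  fix w assume "w \<in> set_pmf (wealth_dist \<pi>)"
  then obtain h where h: "h \<in> set_pmf (hist_dist P s0 \<pi> T)" and w: "w = wealth r op w0 h"
    unfolding wealth_dist_def by auto
  from hist_dist_support[OF h] have "h \<in> T_histories s0 T" unfolding T_histories_def by auto
  then show "w \<in> W" using w unfolding wealth_levels_def by auto
qed

lemma sum_W: "(\<Sum>w\<in>W. p \<pi> w) = 1"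
  unfolding p_def by (rule sum_pmf_eq_1[OF W_finite wd_support])

lemma F_mono: "a \<in> W \<Longrightarrow> b \<in> W \<Longrightarrow> le a b \<Longrightarrow> F \<pi> a \<le> F \<pi> b"
proof -
  assume a: "a \<in> W" "b \<in> W" "le a b"
  have sub: "{w'\<in>W. le w' a} \<subseteq> {w'\<in>W. le w' b}"
  proof
    fix x assume "x \<in> {w'\<in>W. le w' a}"
    then have x: "x \<in> W" "le x a" by auto
    from le_trans[OF x(1) a(1) a(2) x(2) a(3)] x(1) show "x \<in> {w'\<in>W. le w' b}" by simp
  qed
  have fin: "finite {w'\<in>W. le w' b}" using W_finite by simp
  show ?thesis unfolding F_def
    by (rule sum_mono2[OF fin sub]) (simp add: p_def)
qed

lemma ex_min: "finite S \<Longrightarrow> S \<noteq> {} \<Longrightarrow> S \<subseteq> W \<Longrightarrow> \<exists>m\<in>S. \<forall>x\<in>S. le m x"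
proof (induction S rule: finite_ne_induct)
  case (singleton x) then show ?case using le_refl by auto
next
  case (insert x F)
  then obtain m where m: "m \<in> F" "\<forall>y\<in>F. le m y" by auto
  have xW: "x \<in> W" and FW: "F \<subseteq> W" using insert.prems by auto
  have mW: "m \<in> W" using m(1) FW by auto
  show ?case
  proof (cases "le x m")
    case True
    have "\<forall>y\<in>insert x F. le x y"
    proof
      fix y assume "y \<in> insert x F"
      then show "le x y"
      proof
        assume "y = x" then show ?thesis using le_refl[OF xW] by simp
      next
        assume y: "y \<in> F"
        then have "y \<in> W" using FW by auto
        from le_trans[OF xW mW this True] y m(2) show ?thesis by simp
      qed
    qed
    then show ?thesis by auto
  next
    case False
    then have "le m x" using le_total[OF xW mW] by simp
    then show ?thesis using m by auto
  qed
qed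

lemma ex_max: "finite S \<Longrightarrow> S \<noteq> {} \<Longrightarrow> S \<subseteq> W \<Longrightarrow> \<exists>m\<in>S. \<forall>x\<in>S. le x m"
proof (induction S rule: finite_ne_induct)
  case (singleton x) then show ?case using le_refl by auto
next
  case (insert x F)
  then obtain m where m: "m \<in> F" "\<forall>y\<in>F. le y m" by auto
  have xW: "x \<in> W" and FW: "F \<subseteq> W" using insert.prems by auto
  have mW: "m \<in> W" using m(1) FW by auto
  show ?case
  proof (cases "le m x")
    case True
    have "\<forall>y\<in>insert x F. le y x"
    proof
      fix y assume "y \<in> insert x F"
      then show "le y x"
      proof
        assume "y = x" then show ?thesis using le_refl[OF xW] by simp
      next
        assume y: "y \<in> F"
        then have yW: "y \<in> W" using FW by auto
        have "le y m" using y m(2) by simp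
        from le_trans[OF yW mW xW this True] show ?thesis .
      qed
    qed
    then show ?thesis by auto
  next
    case False
    then have "le x m" using le_total[OF xW mW] by simp
    then show ?thesis using m by auto
  qed
qed

lemma lower_q_props:
  assumes "\<tau> \<le> 1"
  shows "lower_q \<pi> \<tau> \<in> W \<and> F \<pi> (lower_q \<pi> \<tau>) \<ge> \<tau> \<and> (\<forall>q'\<in>W. F \<pi> q' \<ge> \<tau> \<longrightarrow> le (lower_q \<pi> \<tau>) q')"
proof -
  obtain t where t: "t \<in> W" "\<forall>x\<in>W. le x t" using has_greatest by auto
  have "{w'\<in>W. le w' t} = W" using t by auto
  then have "F \<pi> t = 1" unfolding F_def using sum_W by simp
  then have tS: "t \<in> {q\<in>W. F \<pi> q \<ge> \<tau>}" using t assms by auto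
  have fin: "finite {q\<in>W. F \<pi> q \<ge> \<tau>}" using W_finite by simp
  obtain m where m: "m \<in> {q\<in>W. F \<pi> q \<ge> \<tau>}" "\<forall>x\<in>{q\<in>W. F \<pi> q \<ge> \<tau>}. le m x"
    using ex_min[OF fin] tS by blast
  have "\<exists>!q. q \<in> W \<and> F \<pi> q \<ge> \<tau> \<and> (\<forall>q'\<in>W. F \<pi> q' \<ge> \<tau> \<longrightarrow> le q q')"
  proof (rule ex1I[of _ m])
    show "m \<in> W \<and> F \<pi> m \<ge> \<tau> \<and> (\<forall>q'\<in>W. F \<pi> q' \<ge> \<tau> \<longrightarrow> le m q')" using m by auto
  next
    fix y assume y: "y \<in> W \<and> F \<pi> y \<ge> \<tau> \<and> (\<forall>q'\<in>W. F \<pi> q' \<ge> \<tau> \<longrightarrow> le y q')"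
    have "le y m" using y m(1) by auto
    moreover have "le m y" using y m(2) by auto
    ultimately show "y = m" using le_antisym[of y m] y m(1) by auto
  qed
  from theI'[OF this] show ?thesis unfolding lower_q_def .
qed

lemma upper_q_props:
  assumes "G \<pi> w \<ge> 1 - \<tau>" "w \<in> W"
  shows "upper_q \<pi> \<tau> \<in> W \<and> G \<pi> (upper_q \<pi> \<tau>) \<ge> 1 - \<tau> \<and> (\<forall>q'\<in>W. G \<pi> q' \<ge> 1 - \<tau> \<longrightarrow> le q' (upper_q \<pi> \<tau>))"
proof -
  have tS: "w \<in> {q\<in>W. G \<pi> q \<ge> 1 - \<tau>}" using assms by auto
  have fin: "finite {q\<in>W. G \<pi> q \<ge> 1 - \<tau>}" using W_finite by simp
  obtain m where m: "m \<in> {q\<in>W. G \<pi> q \<ge> 1 - \<tau>}" "\<forall>x\<in>{q\<in>W. G \<pi> q \<ge> 1 - \<tau>}. le x m"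
    using ex_max[OF fin] tS by blast
  have "\<exists>!q. q \<in> W \<and> G \<pi> q \<ge> 1 - \<tau> \<and> (\<forall>q'\<in>W. G \<pi> q' \<ge> 1 - \<tau> \<longrightarrow> le q' q)"
  proof (rule ex1I[of _ m])
    show "m \<in> W \<and> G \<pi> m \<ge> 1 - \<tau> \<and> (\<forall>q'\<in>W. G \<pi> q' \<ge> 1 - \<tau> \<longrightarrow> le q' m)" using m by auto
  next
    fix y assume y: "y \<in> W \<and> G \<pi> y \<ge> 1 - \<tau> \<and> (\<forall>q'\<in>W. G \<pi> q' \<ge> 1 - \<tau> \<longrightarrow> le q' y)"
    have "le m y" using y m(1) by auto
    moreover have "le y m" using y m(2) by auto
    ultimately show "y = m" using le_antisym[of y m] y m(1) by auto
  qed
  from theI'[OF this] show ?thesis unfolding upper_q_def .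
qed

lemma upper_q_W:
  assumes "0 \<le> \<tau>"
  shows "upper_q \<pi> \<tau> \<in> W"
proof -
  obtain b where b: "b \<in> W" "\<forall>x\<in>W. le b x" using has_least by auto
  have "{w'\<in>W. le b w'} = W" using b by auto
  then have "G \<pi> b = 1" unfolding G_def using sum_W by simp
  then have "G \<pi> b \<ge> 1 - \<tau>" using assms by simp
  from upper_q_props[OF this b(1)] show ?thesis by simp
qed

lemma lower_opt_props:
  assumes "\<tau> \<le> 1"
  shows "lower_q_opt \<tau> \<in> W \<and> (\<forall>\<pi>. le (lower_q \<pi> \<tau>) (lower_q_opt \<tau>))"
proof -
  let ?Q = "range (\<lambda>\<pi>. lower_q \<pi> \<tau>)"
  have sub: "?Q \<subseteq> W" using lower_q_props[OF assms] by auto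
  have fin: "finite ?Q" using finite_subset[OF sub W_finite] .
  obtain m where m: "m \<in> ?Q" "\<forall>x\<in>?Q. le x m" using ex_max[OF fin _ sub] by auto
  have mW: "m \<in> W" using m(1) sub by auto
  have "\<exists>!q. (\<exists>\<pi>. q = lower_q \<pi> \<tau>) \<and> (\<forall>\<pi>. le (lower_q \<pi> \<tau>) q)"
  proof (rule ex1I[of _ m])
    show "(\<exists>\<pi>. m = lower_q \<pi> \<tau>) \<and> (\<forall>\<pi>. le (lower_q \<pi> \<tau>) m)" using m by auto
  next
    fix y assume y: "(\<exists>\<pi>. y = lower_q \<pi> \<tau>) \<and> (\<forall>\<pi>. le (lower_q \<pi> \<tau>) y)"
    then have yQ: "y \<in> ?Q" by auto
    then have yW: "y \<in> W" using sub by auto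
    have "le y m" using yQ m(2) by auto
    moreover have "le m y" using y m(1) by auto
    ultimately show "y = m" using le_antisym[OF yW mW] by auto
  qed
  from theI'[OF this] have "(\<exists>\<pi>. lower_q_opt \<tau> = lower_q \<pi> \<tau>) \<and> (\<forall>\<pi>. le (lower_q \<pi> \<tau>) (lower_q_opt \<tau>))"
    unfolding lower_q_opt_def .
  then show ?thesis using sub by auto
qed

lemma upper_opt_props:
  assumes "0 \<le> \<tau>"
  shows "upper_q_opt \<tau> \<in> W \<and> (\<forall>\<pi>. le (upper_q \<pi> \<tau>) (upper_q_opt \<tau>))"
proof -
  let ?Q = "range (\<lambda>\<pi>. upper_q \<pi> \<tau>)"
  have sub: "?Q \<subseteq> W" using upper_q_W[OF assms] by auto
  have fin: "finite ?Q" using finite_subset[OF sub W_finite] .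
  obtain m where m: "m \<in> ?Q" "\<forall>x\<in>?Q. le x m" using ex_max[OF fin _ sub] by auto
  have mW: "m \<in> W" using m(1) sub by auto
  have "\<exists>!q. (\<exists>\<pi>. q = upper_q \<pi> \<tau>) \<and> (\<forall>\<pi>. le (upper_q \<pi> \<tau>) q)"
  proof (rule ex1I[of _ m])
    show "(\<exists>\<pi>. m = upper_q \<pi> \<tau>) \<and> (\<forall>\<pi>. le (upper_q \<pi> \<tau>) m)" using m by auto
  next
    fix y assume y: "(\<exists>\<pi>. y = upper_q \<pi> \<tau>) \<and> (\<forall>\<pi>. le (upper_q \<pi> \<tau>) y)"
    then have yQ: "y \<in> ?Q" by auto
    then have yW: "y \<in> W" using sub by auto
    have "le y m" using yQ m(2) by auto
    moreover have "le m y" using y m(1) by auto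
    ultimately show "y = m" using le_antisym[OF yW mW] by auto
  qed
  from theI'[OF this] have "(\<exists>\<pi>. upper_q_opt \<tau> = upper_q \<pi> \<tau>) \<and> (\<forall>\<pi>. le (upper_q \<pi> \<tau>) (upper_q_opt \<tau>))"
    unfolding upper_q_opt_def .
  then show ?thesis using sub by auto
qed

lemma lower_part:
  assumes "\<tau> \<le> 1" "w \<in> W" "d w (lower_q_opt \<tau>) \<le> \<epsilon>" "F \<pi> w < \<tau>"
  shows "eps_opt_lower \<epsilon> \<tau> \<pi>"
proof -
  have qW: "lower_q \<pi> \<tau> \<in> W" and qF: "F \<pi> (lower_q \<pi> \<tau>) \<ge> \<tau>"
    using lower_q_props[OF assms(1), of \<pi>] by auto
  have oW: "lower_q_opt \<tau> \<in> W" and ole: "le (lower_q \<pi> \<tau>) (lower_q_opt \<tau>)"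
    using lower_opt_props[OF assms(1)] by auto
  have "le w (lower_q \<pi> \<tau>)"
  proof (rule ccontr)
    assume "\<not> le w (lower_q \<pi> \<tau>)"
    then have "le (lower_q \<pi> \<tau>) w" using le_total[OF assms(2) qW] by simp
    then have "F \<pi> (lower_q \<pi> \<tau>) \<le> F \<pi> w" using F_mono[OF qW assms(2)] by simp
    then show False using qF assms(4) by linarith
  qed
  then have "d (lower_q \<pi> \<tau>) (lower_q_opt \<tau>) \<le> d w (lower_q_opt \<tau>)"
    using d_consistent[OF assms(2) qW oW _ ole] by simp
  then show ?thesis unfolding eps_opt_lower_def using assms(3) by linarith
qed

lemma upper_part:
  assumes "0 \<le> \<tau>" "w \<in> W" "d w (upper_q_opt \<tau>) \<le> \<epsilon>" "G \<pi> w \<ge> 1 - \<tau>"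
  shows "eps_opt_upper \<epsilon> \<tau> \<pi>"
proof -
  have qW: "upper_q \<pi> \<tau> \<in> W" and qmax: "\<forall>q'\<in>W. G \<pi> q' \<ge> 1 - \<tau> \<longrightarrow> le q' (upper_q \<pi> \<tau>)"
    using upper_q_props[OF assms(4) assms(2)] by auto
  have oW: "upper_q_opt \<tau> \<in> W" and ole: "le (upper_q \<pi> \<tau>) (upper_q_opt \<tau>)"
    using upper_opt_props[OF assms(1)] by auto
  have "le w (upper_q \<pi> \<tau>)" using qmax assms(2,4) by auto
  then have "d (upper_q \<pi> \<tau>) (upper_q_opt \<tau>) \<le> d w (upper_q_opt \<tau>)"
    using d_consistent[OF assms(2) qW oW _ ole] by simp
  then show ?thesis unfolding eps_opt_upper_def using assms(3) by linarith
qed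

end

theorem lemma4:
  fixes P :: "'s::finite \<Rightarrow> 'a::finite \<Rightarrow> 's pmf"
    and r :: "'s \<Rightarrow> 'a \<Rightarrow> 'w" and s0 :: 's and T :: nat
    and op :: "'w \<Rightarrow> 'w \<Rightarrow> 'w" and w0 :: 'w
    and le :: "'w \<Rightarrow> 'w \<Rightarrow> bool" and d :: "'w \<Rightarrow> 'w \<Rightarrow> real"
    and \<epsilon> :: real
  assumes "quantile_mdp r s0 T op w0 le d"
    and "\<epsilon> > 0"
  shows "(\<forall>(\<tau>::real) (\<pi>::('s,'a) policy). 0 < \<tau> \<and> \<tau> \<le> 1 \<and>
            (\<exists>w\<in>wealth_levels r op w0 s0 T.
               d w (quantile_mdp.lower_q_opt P r s0 T op w0 le \<tau>) \<le> \<epsilon>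
               \<and> quantile_mdp.F P r s0 T op w0 le \<pi> w < \<tau>)
          \<longrightarrow> quantile_mdp.eps_opt_lower P r s0 T op w0 le d \<epsilon> \<tau> \<pi>)
       \<and> (\<forall>(\<tau>::real) (\<pi>::('s,'a) policy). 0 \<le> \<tau> \<and> \<tau> < 1 \<and>
            (\<exists>w\<in>wealth_levels r op w0 s0 T.
               d w (quantile_mdp.upper_q_opt P r s0 T op w0 le \<tau>) \<le> \<epsilon>
               \<and> quantile_mdp.G P r s0 T op w0 le \<pi> w \<ge> 1 - \<tau>)
          \<longrightarrow> quantile_mdp.eps_opt_upper P r s0 T op w0 le d \<epsilon> \<tau> \<pi>)"
proof -
  interpret quantile_mdp P r s0 T op w0 le d by fact
  show ?thesis
  proof (intro conjI allI impI)
    fix \<tau> \<pi> assume h: "0 < \<tau> \<and> \<tau> \<le> 1 \<and> (\<exists>w\<in>W. d w (lower_q_opt \<tau>) \<le> \<epsilon> \<and> F \<pi> w < \<tau>)"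
    then obtain w where w: "w \<in> W" "d w (lower_q_opt \<tau>) \<le> \<epsilon>" "F \<pi> w < \<tau>" by blast
    have "\<tau> \<le> 1" using h by simp
    from lower_part[OF this w] show "eps_opt_lower \<epsilon> \<tau> \<pi>" .
  next
    fix \<tau> \<pi> assume h: "0 \<le> \<tau> \<and> \<tau> < 1 \<and> (\<exists>w\<in>W. d w (upper_q_opt \<tau>) \<le> \<epsilon> \<and> G \<pi> w \<ge> 1 - \<tau>)"
    then obtain w where w: "w \<in> W" "d w (upper_q_opt \<tau>) \<le> \<epsilon>" "G \<pi> w \<ge> 1 - \<tau>" by blast
    have "0 \<le> \<tau>" using h by simp
    from upper_part[OF this w] show "eps_opt_upper \<epsilon> \<tau> \<pi>" .
  qed
qed

end
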